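(* The set of all sampled ReLU networks $\Phi\colon\mathcal{X}\to\mathbb{R}^{N_{L+1}}$, of arbitrary depth and arbitrary widths, is dense in $C(\mathcal{X},\mathbb{R}^{N_{L+1}})$ with respect to the uniform norm.
   Context: Input space: Fix $D\ge1$, Euclidean norm and inner product on $\mathbb{R}^D$. For $A\subseteq\mathbb{R}^D$ let $d(z,A)=\inf_{a\in A}\|z-a\|$, $\mathrm{Med}(A)=\{z:\exists p\neq q\in A,\ \|p-z\|=\|q-z\|=d(z,A)\}$, reach $\tau_A=\inf_{a\in A}d(a,\mathrm{Med}(A))$. Let $\mathcal{X}'\subset\mathbb{R}^D$ be nonempty compact with $\tau_{\mathcal{X}'}>0$, fix $0<\epsilon_I<\min\{\tau_{\mathcal{X}'},1\}$, and $\mathcal{X}=\{x:d(x,\mathcal{X}')\le\epsilon_I\}$. The output dimension $N_{L+1}\ge1$ is fixed. Networks: with $\phi(t)=\max\{t,0\}$, $N_0=D$, a network with $L$ hidden layers computes $\Phi^{(0)}(x)=x$, $\Phi^{(l)}(x)=\phi(W_l\Phi^{(l-1)}(x)-b_l)$ for $l=1,\dots,L$, $\Phi(x)=W_{L+1}\Phi^{(L)}(x)-b_{L+1}$; $w_{l,i},b_{l,i}$ denote the $i$-th row of $W_l$ and entry of $b_l$. It is a sampled network if for all $l\le L$, $i\le N_l$ there are $x^{(1)}_{0,i},x^{(2)}_{0,i}\in\mathcal{X}$ such that $x^{(j)}_{l-1,i}=\Phi^{(l-1)}(x^{(j)}_{0,i})$ are distinct and $w_{l,i}=\frac{x^{(2)}_{l-1,i}-x^{(1)}_{l-1,i}}{\|x^{(2)}_{l-1,i}-x^{(1)}_{l-1,i}\|^2}$,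 $b_{l,i}=\langle w_{l,i},x^{(1)}_{l-1,i}\rangle$; $W_{L+1},b_{L+1}$ are unrestricted. *)

theory Defs
  imports "HOL-Analysis.Analysis"
begin

definition medial_axis :: "'a::euclidean_space set \<Rightarrow> 'a set" where
  "medial_axis A = {z. \<exists>p q. p \<in> A \<and> q \<in> A \<and> p \<noteq> q \<and>
       dist p z = infdist z A \<and> dist q z = infdist z A}"

text \<open>Reach as an extended real: the infimum over a in A of d(a, Med A),
  with d(a, empty) = +infinity (so an empty medial axis gives reach +infinity).\<close>
definition reach :: "'a::euclidean_space set \<Rightarrow> ereal" where
  "reach A = (INF a\<in>A. (if medial_axis A = {} then (\<infinity>::ereal)
                         else ereal (infdist a (medial_axis A))))"

definition dotl :: "real list \<Rightarrow> real list \<Rightarrow> real" where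
  "dotl xs ys = sum_list (map2 (*) xs ys)"

definition norml :: "real list \<Rightarrow> real" where
  "norml xs = sqrt (dotl xs xs)"

definition minusl :: "real list \<Rightarrow> real list \<Rightarrow> real list" where
  "minusl xs ys = map2 (-) xs ys"

definition scalel :: "real \<Rightarrow> real list \<Rightarrow> real list" where
  "scalel c xs = map (\<lambda>t. c * t) xs"

definition relu :: "real \<Rightarrow> real" where
  "relu t = max t 0"

text \<open>A network with L = 1 + length Ls hidden layers, input space 'a (= R^D),
  output space 'b (= R^{N_{L+1}}).  Layer 1 is a list of neurons (w_{1,i}, b_{1,i})
  with w_{1,i} in 'a; layer l >= 2 is a list of neurons (w_{l,i}, b_{l,i}) with
  w_{l,i} a real list of length N_{l-1}.  The output layer is given by the columns
  cs of W_{L+1} (one vector in 'b per neuron of layer L) and the bias b_{L+1}.\<close>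

type_synonym 'a first_layer = "('a \<times> real) list"
type_synonym hidden_layers = "((real list \<times> real) list) list"
type_synonym ('a, 'b) relu_net = "'a first_layer \<times> hidden_layers \<times> 'b list \<times> 'b"

definition eval_first :: "('a::euclidean_space) first_layer \<Rightarrow> 'a \<Rightarrow> real list" where
  "eval_first L1 x = map (\<lambda>(w, b). relu (w \<bullet> x - b)) L1"

definition eval_layer :: "(real list \<times> real) list \<Rightarrow> real list \<Rightarrow> real list" where
  "eval_layer W h = map (\<lambda>(w, b). relu (dotl w h - b)) W"

text \<open>hid L1 Ls k x = Phi^{(k+1)}(x), the output of hidden layer k+1.\<close>
definition hid :: "('a::euclidean_space) first_layer \<Rightarrow> hidden_layers \<Rightarrow> nat \<Rightarrow> 'a \<Rightarrow> real list" where
  "hid L1 Ls k x = foldl (\<lambda>h W. eval_layer W h) (eval_first L1 x) (take k Ls)"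

definition net_eval :: "('a::euclidean_space, 'b::real_vector) relu_net \<Rightarrow> 'a \<Rightarrow> 'b" where
  "net_eval N x = (case N of (L1, Ls, cs, b) \<Rightarrow>
      sum_list (map2 (\<lambda>t c. t *\<^sub>R c) (hid L1 Ls (length Ls) x) cs) - b)"

definition well_formed :: "('a::euclidean_space, 'b::real_vector) relu_net \<Rightarrow> bool" where
  "well_formed N = (case N of (L1, Ls, cs, b) \<Rightarrow>
      L1 \<noteq> [] \<and> (\<forall>k<length Ls. Ls ! k \<noteq> [] \<and>
          (\<forall>(w, c) \<in> set (Ls ! k). length w = (if k = 0 then length L1 else length (Ls ! (k - 1)))))
      \<and> length cs = (if Ls = [] then length L1 else length (last Ls)))"

definition sampled :: "'a::euclidean_space set \<Rightarrow> ('a, 'b::real_vector) relu_net \<Rightarrow> bool" where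
  "sampled X N = (case N of (L1, Ls, cs, b) \<Rightarrow>
      (\<forall>(w, c) \<in> set L1. \<exists>x1 x2. x1 \<in> X \<and> x2 \<in> X \<and> x1 \<noteq> x2 \<and>
          w = (1 / (norm (x2 - x1))\<^sup>2) *\<^sub>R (x2 - x1) \<and> c = w \<bullet> x1) \<and>
      (\<forall>k<length Ls. \<forall>(w, c) \<in> set (Ls ! k). \<exists>x1 x2. x1 \<in> X \<and> x2 \<in> X \<and>
          hid L1 Ls k x1 \<noteq> hid L1 Ls k x2 \<and>
          w = scalel (1 / (norml (minusl (hid L1 Ls k x2) (hid L1 Ls k x1)))\<^sup>2)
                     (minusl (hid L1 Ls k x2) (hid L1 Ls k x1)) \<and>
          c = dotl w (hid L1 Ls k x1)))"

end

theory Submission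
  imports Defs
begin

lemma pl_approx:
  fixes g :: "real \<Rightarrow> real"
  assumes gc: "continuous_on {a..b} g" and ab: "a < b" and ep: "\<epsilon> > 0"
  shows "\<exists>c0 (n::nat) \<alpha> c \<beta> d. \<forall>t\<in>{a..b}. \<bar>g t - (c0 + (\<Sum>k<n. \<alpha> k * relu (t - c k) + \<beta> k * relu (t - d k)))\<bar> < \<epsilon>"
proof -
  have "uniformly_continuous_on {a..b} g"
    using compact_uniformly_continuous[OF gc] by simp
  then obtain \<delta> where dp: "\<delta> > 0" and dU: "\<And>s t. s \<in> {a..b} \<Longrightarrow> t \<in> {a..b} \<Longrightarrow> dist s t < \<delta> \<Longrightarrow> dist (g s) (g t) < \<epsilon>/2"
    unfolding uniformly_continuous_on_def using ep by (metis half_gt_zero)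
  obtain n :: nat where nn: "(b - a) / \<delta> < n" using reals_Archimedean2 by blast
  have npos: "n > 0"
  proof (rule ccontr)
    assume "\<not> n > 0"
    then have "n = 0" by simp
    moreover have "(b - a) / \<delta> > 0" using ab dp by simp
    ultimately show False using nn by simp
  qed
  define h where "h = (b - a) / n"
  have hp: "h > 0" using ab npos by (simp add: h_def)
  have hd: "h < \<delta>" using nn dp npos unfolding h_def by (simp add: field_simps)
  define tk where "tk k = a + real k * h" for k
  have tkn: "tk n = b" using npos by (simp add: tk_def h_def)
  have tkin: "tk k \<in> {a..b}" if "k \<le> n" for k
  proof -
    have "real k * h \<le> real n * h" using that hp by (simp add: mult_right_mono)
    moreover have "real n * h = b - a" using npos by (simp add: h_def)
    moreover have "0 \<le> real k * h" using hp by simp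
    ultimately show ?thesis unfolding tk_def by auto
  qed
  define D where "D k = g (tk (Suc k)) - g (tk k)" for k
  define trm where "trm k t = D k / h * relu (t - tk k) + (- D k / h) * relu (t - tk (Suc k))" for k t
  have main: "\<forall>t\<in>{a..b}. \<bar>g t - (g a + (\<Sum>k<n. D k / h * relu (t - tk k) + (- D k / h) * relu (t - tk (Suc k))))\<bar> < \<epsilon>"
  proof (rule ballI)
    fix t assume t: "t \<in> {a..b}"
    define m where "m = min (n - 1) (nat \<lfloor>(t - a) / h\<rfloor>)"
    have mn: "m < n" using npos by (simp add: m_def)
    have t1: "tk m \<le> t"
    proof -
      have "real m \<le> real (nat \<lfloor>(t - a) / h\<rfloor>)" by (simp add: m_def)
      also have "\<dots> \<le> (t - a) / h" using t hp by (simp add: divide_nonneg_pos)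
      finally show ?thesis using hp by (simp add: tk_def field_simps)
    qed
    have t2: "t \<le> tk (Suc m)"
    proof (cases "nat \<lfloor>(t - a) / h\<rfloor> \<le> n - 1")
      case True
      then have "m = nat \<lfloor>(t - a) / h\<rfloor>" by (simp add: m_def)
      moreover have "(t - a) / h \<le> real (nat \<lfloor>(t - a) / h\<rfloor>) + 1"
      proof -
        have "0 \<le> (t - a) / h" using t hp by simp
        then have "0 \<le> \<lfloor>(t - a) / h\<rfloor>" by simp
        then have "real (nat \<lfloor>(t - a) / h\<rfloor>) = real_of_int \<lfloor>(t - a) / h\<rfloor>" by simp
        moreover have "(t - a) / h \<le> real_of_int \<lfloor>(t - a) / h\<rfloor> + 1" by linarith
        ultimately show ?thesis by simp
      qed
      ultimately show ?thesis using hp by (simp add: tk_def field_simps)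
    next
      case False
      then have "m = n - 1" by (simp add: m_def)
      then have "Suc m = n" using npos by simp
      then show ?thesis using tkn t by simp
    qed
    have termk: "trm k t = (if k < m then D k else 0) + (if k = m then D m * ((t - tk m) / h) else 0)" for k
    proof -
      have tmono: "tk i \<le> tk j" if "i \<le> j" for i j using that hp by (simp add: tk_def mult_right_mono)
      consider "k < m" | "k = m" | "k > m" by linarith
      then show ?thesis
      proof cases
        case 1
        then have "tk (Suc k) \<le> t" using tmono[of "Suc k" m] t1 by simp
        moreover have "tk k \<le> t" using tmono[of k "Suc k"] calculation by simp
        moreover have "tk (Suc k) - tk k = h" by (simp add: tk_def algebra_simps)
        ultimately show ?thesis using 1 hp unfolding trm_def relu_def by (simp add: field_simps)
      next
        case 2
        then show ?thesis using t1 t2 hp unfolding trm_def relu_def by (simp add: field_simps)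
      next
        case 3
        then have "t \<le> tk k" using tmono[of "Suc m" k] t2 by simp
        moreover have "tk k \<le> tk (Suc k)" using tmono by simp
        ultimately show ?thesis using 3 unfolding trm_def relu_def by simp
      qed
    qed
    have "(\<Sum>k<n. trm k t) = (\<Sum>k<n. if k < m then D k else 0) + (\<Sum>k<n. if k = m then D m * ((t - tk m) / h) else 0)"
      by (simp add: termk sum.distrib)
    also have "(\<Sum>k<n. if k < m then D k else 0) = (\<Sum>k<m. D k)"
    proof -
      have "(\<Sum>k<n. if k < m then D k else 0) = (\<Sum>k\<in>{..<n} \<inter> {k. k < m}. D k)"
        by (simp add: sum.inter_restrict)
      also have "{..<n} \<inter> {k. k < m} = {..<m}" using mn by auto
      finally show ?thesis .
    qed
    also have "(\<Sum>k<m. D k) = g (tk m) - g a"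
      unfolding D_def using sum_lessThan_telescope[of "\<lambda>i. g (tk i)" m] by (simp add: tk_def)
    also have "(\<Sum>k<n. if k = m then D m * ((t - tk m) / h) else 0) = D m * ((t - tk m) / h)"
      using mn by simp
    finally have ps: "(\<Sum>k<n. trm k t) = g (tk m) - g a + D m * ((t - tk m) / h)" .
    have th0: "0 \<le> (t - tk m) / h" "(t - tk m) / h \<le> 1"
      using t1 t2 hp by (auto simp: tk_def field_simps)
    have tkm: "tk m \<in> {a..b}" "tk (Suc m) \<in> {a..b}" using tkin mn by auto
    have e1: "\<bar>g t - g (tk m)\<bar> < \<epsilon>/2"
    proof -
      have "tk (Suc m) - tk m = h" by (simp add: tk_def algebra_simps)
      then have "dist t (tk m) < \<delta>" using t1 t2 hd by (simp add: dist_real_def)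
      then show ?thesis using dU[OF t tkm(1)] by (simp add: dist_real_def)
    qed
    have e2: "\<bar>D m\<bar> < \<epsilon>/2"
      using dU[OF tkm(2) tkm(1)] hd hp by (simp add: dist_real_def tk_def D_def algebra_simps)
    have e3: "\<bar>D m * ((t - tk m) / h)\<bar> \<le> \<bar>D m\<bar>"
    proof -
      have "\<bar>D m * ((t - tk m) / h)\<bar> = \<bar>D m\<bar> * ((t - tk m) / h)" using th0 abs_of_nonneg[OF th0(1)] by (simp only: abs_mult)
      also have "\<dots> \<le> \<bar>D m\<bar> * 1" using th0 by (intro mult_left_mono) auto
      finally show ?thesis by simp
    qed
    show "\<bar>g t - (g a + (\<Sum>k<n. D k / h * relu (t - tk k) + (- D k / h) * relu (t - tk (Suc k))))\<bar> < \<epsilon>"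
      using ps e1 e2 e3 unfolding trm_def by linarith
  qed
  show ?thesis
    apply (rule exI[where x="g a"], rule exI[where x=n], rule exI[where x="\<lambda>k. D k / h"], rule exI[where x=tk])
    apply (rule exI[where x="\<lambda>k. - D k / h"], rule exI[where x="\<lambda>k. tk (Suc k)"])
    using main by simp
qed



definition valid :: "'a::euclidean_space set \<Rightarrow> 'a \<times> real \<Rightarrow> bool" where
  "valid X wb \<longleftrightarrow> (\<exists>x1 x2. x1 \<in> X \<and> x2 \<in> X \<and> x1 \<noteq> x2 \<and>
      fst wb = (1 / (norm (x2 - x1))\<^sup>2) *\<^sub>R (x2 - x1) \<and> snd wb = fst wb \<bullet> x1)"

inductive_set Sr :: "'a::euclidean_space set \<Rightarrow> ('a \<Rightarrow> real) set" for X where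
  Sc: "(\<lambda>x. c) \<in> Sr X"
| Sn: "valid X (w, b) \<Longrightarrow> (\<lambda>x. k * relu (w \<bullet> x - b)) \<in> Sr X"
| Sa: "f \<in> Sr X \<Longrightarrow> g \<in> Sr X \<Longrightarrow> (\<lambda>x. f x + g x) \<in> Sr X"

lemma Sr_scale: "f \<in> Sr X \<Longrightarrow> (\<lambda>x. k * f x) \<in> Sr X"
proof (induction rule: Sr.induct)
  case (Sc c) show ?case using Sr.Sc by blast
next
  case (Sn w b k')
  have "(\<lambda>x. (k * k') * relu (w \<bullet> x - b)) \<in> Sr X" using Sn Sr.Sn by blast
  then show ?case by (simp add: mult.assoc)
next
  case (Sa f g)
  then show ?case using Sr.Sa[of "\<lambda>x. k * f x" X "\<lambda>x. k * g x"] by (simp add: distrib_left)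
qed

lemma Sr_diff: "f \<in> Sr X \<Longrightarrow> g \<in> Sr X \<Longrightarrow> (\<lambda>x. f x - g x) \<in> Sr X"
  using Sr.Sa[OF _ Sr_scale[of g X "-1"], of f] by simp

definition SrX :: "'a::euclidean_space set \<Rightarrow> ('a \<Rightarrow> real) \<Rightarrow> bool" where
  "SrX X h \<longleftrightarrow> (\<exists>s\<in>Sr X. \<forall>x\<in>X. s x = h x)"

lemma SrX_Sr: "s \<in> Sr X \<Longrightarrow> SrX X s" unfolding SrX_def by blast
lemma SrX_const: "SrX X (\<lambda>x. c)" using SrX_Sr Sr.Sc by blast
lemma SrX_add: "SrX X f \<Longrightarrow> SrX X g \<Longrightarrow> SrX X (\<lambda>x. f x + g x)"
  unfolding SrX_def by (metis (no_types, lifting) Sr.Sa)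
lemma SrX_scale: "SrX X f \<Longrightarrow> SrX X (\<lambda>x. k * f x)"
  unfolding SrX_def by (metis (no_types, lifting) Sr_scale)
lemma SrX_cong: "SrX X f \<Longrightarrow> (\<And>x. x \<in> X \<Longrightarrow> f x = g x) \<Longrightarrow> SrX X g"
  unfolding SrX_def by auto
lemma SrX_sum: "(\<And>k. k < n \<Longrightarrow> SrX X (f k)) \<Longrightarrow> SrX X (\<lambda>x. \<Sum>k<(n::nat). f k x)"
proof (induction n)
  case 0 then show ?case using SrX_const[of X 0] by simp
next
  case (Suc n)
  then have "SrX X (\<lambda>x. (\<Sum>k<n. f k x) + f n x)" by (intro SrX_add) auto
  then show ?case by simp
qed

definition gnet :: "'a::euclidean_space set \<Rightarrow> ('a, 'b::euclidean_space) relu_net \<Rightarrow> bool" where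
  "gnet X N \<longleftrightarrow> well_formed N \<and> sampled X N \<and> fst (snd N) = []"

lemma gnet_iff: "gnet X (L1, Ls, cs, b) \<longleftrightarrow> Ls = [] \<and> L1 \<noteq> [] \<and> length cs = length L1 \<and> (\<forall>wb\<in>set L1. valid X wb)"
  unfolding gnet_def well_formed_def sampled_def valid_def by (auto; fastforce)

lemma net_eval_simple: "net_eval (L1, [], cs, b) x = sum_list (map2 (\<lambda>t c. t *\<^sub>R c) (eval_first L1 x) cs) - b"
  by (simp add: net_eval_def hid_def)

lemma eval_first_append: "eval_first (A @ B) x = eval_first A x @ eval_first B x"
  by (simp add: eval_first_def)
lemma length_eval_first: "length (eval_first A x) = length A"
  by (simp add: eval_first_def)

lemma gnet_add:
  assumes "gnet X (L1, Ls, cs, b)" "gnet X (L1', Ls', cs', b')"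
  shows "gnet X (L1 @ L1', [], cs @ cs', b + b') \<and>
    (\<forall>x. net_eval (L1 @ L1', [], cs @ cs', b + b') x = net_eval (L1, Ls, cs, b) x + net_eval (L1', Ls', cs', b') x)"
  using assms unfolding gnet_iff
  by (auto simp: net_eval_simple eval_first_append length_eval_first zip_append algebra_simps)

lemma Sr_net:
  assumes "f \<in> Sr X" "valid X n0"
  shows "\<exists>N :: ('a::euclidean_space, 'b::euclidean_space) relu_net. gnet X N \<and> (\<forall>x. net_eval N x = f x *\<^sub>R v)"
  using assms(1)
proof (induction rule: Sr.induct)
  case (Sc c)
  have "gnet X ([n0], [], [0::'b], - (c *\<^sub>R v))" using assms(2) by (simp add: gnet_iff)
  moreover have "\<forall>x. net_eval ([n0], [], [0::'b], - (c *\<^sub>R v)) x = c *\<^sub>R v"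
    by (simp add: net_eval_simple eval_first_def)
  ultimately show ?case by blast
next
  case (Sn w b k)
  have "gnet X ([(w, b)], [], [k *\<^sub>R v], 0)" using Sn by (simp add: gnet_iff)
  moreover have "\<forall>x. net_eval ([(w, b)], [], [k *\<^sub>R v], 0) x = (k * relu (w \<bullet> x - b)) *\<^sub>R v"
    by (simp add: net_eval_simple eval_first_def mult.commute)
  ultimately show ?case by blast
next
  case (Sa f g)
  then obtain N1 N2 :: "('a, 'b) relu_net" where N: "gnet X N1" "\<forall>x. net_eval N1 x = f x *\<^sub>R v"
    "gnet X N2" "\<forall>x. net_eval N2 x = g x *\<^sub>R v" by blast
  obtain L1 Ls cs b where N1: "N1 = (L1, Ls, cs, b)" by (cases N1) auto
  obtain L1' Ls' cs' b' where N2: "N2 = (L1', Ls', cs', b')" by (cases N2) auto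
  show ?case using gnet_add[of X L1 Ls cs b L1' Ls' cs' b'] N N1 N2 by (auto simp: scaleR_add_left)
qed

lemma sum_net:
  assumes "finite B" "valid X n0" "\<forall>i\<in>B. s i \<in> Sr X"
  shows "\<exists>N :: ('a::euclidean_space, 'b::euclidean_space) relu_net. gnet X N \<and> (\<forall>x. net_eval N x = (\<Sum>i\<in>B. s i x *\<^sub>R i))"
  using assms(1,3)
proof (induction B rule: finite_induct)
  case empty
  have "gnet X ([n0], [], [0::'b], 0)" using assms(2) by (simp add: gnet_iff)
  moreover have "\<forall>x. net_eval ([n0], [], [0::'b], 0) x = 0"
    by (simp add: net_eval_simple eval_first_def)
  ultimately show ?case by auto
next
  case (insert i B)
  then obtain N1 :: "('a, 'b) relu_net" where N: "gnet X N1" "\<forall>x. net_eval N1 x = (\<Sum>i\<in>B. s i x *\<^sub>R i)" by auto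
  obtain N2 :: "('a, 'b) relu_net" where N': "gnet X N2" "\<forall>x. net_eval N2 x = s i x *\<^sub>R i"
    using Sr_net[of "s i" X n0 i] insert assms(2) by auto
  obtain L1 Ls cs b where N1: "N1 = (L1, Ls, cs, b)" by (cases N1) auto
  obtain L1' Ls' cs' b' where N2: "N2 = (L1', Ls', cs', b')" by (cases N2) auto
  show ?case using gnet_add[of X L1' Ls' cs' b' L1 Ls cs b] N N' N1 N2 insert by auto
qed



lemma relu_scale_pos: "(\<delta>::real) > 0 \<Longrightarrow> \<delta> * relu (z / \<delta>) = relu z"
  unfolding relu_def by (cases "z \<ge> 0") (auto simp: max_def field_simps)

lemma relu_scale_neg: "(\<delta>::real) < 0 \<Longrightarrow> (- \<delta>) * relu (z / \<delta>) = relu (- z)"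
  unfolding relu_def by (cases "z \<ge> 0") (auto simp: max_def field_simps)

lemma relu_nn: "z \<ge> 0 \<Longrightarrow> relu z = z" unfolding relu_def by simp
lemma relu_np: "z \<le> 0 \<Longrightarrow> relu z = 0" unfolding relu_def by simp

lemma relu_odd: "relu z - relu (- z) = z"
  unfolding relu_def by auto

inductive EA :: "('a::euclidean_space \<Rightarrow> real) \<Rightarrow> bool" where
  E1: "EA (\<lambda>x. c * exp (u \<bullet> x))"
| E2: "EA f \<Longrightarrow> EA g \<Longrightarrow> EA (\<lambda>x. f x + g x)"

lemma EA_const: "EA (\<lambda>x. c)" using E1[of c 0] by simp

lemma EA_mult: "EA f \<Longrightarrow> EA g \<Longrightarrow> EA (\<lambda>x. f x * g x)"
proof (induction f rule: EA.induct)
  case (E1 c u)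
  show ?case using E1
  proof (induction g rule: EA.induct)
    case (E1 d w)
    have "(\<lambda>x. c * exp (u \<bullet> x) * (d * exp (w \<bullet> x))) = (\<lambda>x. (c * d) * exp ((u + w) \<bullet> x))"
      by (auto simp: fun_eq_iff inner_add_left exp_add)
    then show ?case using EA.E1[of "c * d" "u + w"] by simp
  next
    case (E2 g1 g2)
    have "EA (\<lambda>x. c * exp (u \<bullet> x) * g1 x + c * exp (u \<bullet> x) * g2 x)"
      using E2 by (intro EA.E2) auto
    then show ?case by (simp add: distrib_left)
  qed
next
  case (E2 f1 f2)
  have "EA (\<lambda>x. f1 x * g x + f2 x * g x)" using E2 by (intro EA.E2) auto
  then show ?case by (simp add: distrib_right)
qed

lemma EA_cont: "EA f \<Longrightarrow> continuous_on S f"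
  by (induction rule: EA.induct) (auto intro!: continuous_intros)

lemma EA_sep:
  fixes x y :: "'a::euclidean_space"
  assumes "x \<noteq> y" shows "\<exists>f. EA f \<and> f x \<noteq> f y"
proof (intro exI conjI)
  show "EA (\<lambda>z. 1 * exp ((x - y) \<bullet> z))" by (rule EA.E1)
  have "(x - y) \<bullet> x - (x - y) \<bullet> y = (x - y) \<bullet> (x - y)" by (simp add: inner_diff_right)
  moreover have "(x - y) \<bullet> (x - y) > 0" using assms by simp
  ultimately have "(x - y) \<bullet> x \<noteq> (x - y) \<bullet> y" by linarith
  then show "1 * exp ((x - y) \<bullet> x) \<noteq> 1 * exp ((x - y) \<bullet> y)" by simp
qed

context
  fixes X' X :: "'a::euclidean_space set" and epsI :: real
  assumes cX': "compact X'" and ne: "X' \<noteq> {}" and ep: "0 < epsI" and Xdef: "X = {x. infdist x X' \<le> epsI}"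
begin

lemma inX: "q \<in> X' \<Longrightarrow> dist y q \<le> epsI \<Longrightarrow> y \<in> X"
  using infdist_le[of q X' y] Xdef by auto

lemma nearX': assumes "x \<in> X" shows "\<exists>q\<in>X'. dist x q \<le> epsI"
proof -
  obtain q where "q \<in> X'" "infdist x X' = dist x q"
    using infdist_attains_inf[of X' x] cX' ne compact_imp_closed by blast
  then show ?thesis using assms Xdef by auto
qed

lemma X'X: "X' \<subseteq> X" using inX ep by (metis dist_self less_eq_real_def subsetI)

lemma compactX: "compact X"
proof -
  have "closed {x. infdist x X' \<le> epsI}"
    by (intro closed_Collect_le continuous_intros)
  moreover obtain r where r: "\<forall>q\<in>X'. norm q \<le> r"
    using compact_imp_bounded[OF cX'] bounded_iff by blast
  have "bounded X"
    unfolding bounded_iff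
  proof (intro exI ballI)
    fix x assume "x \<in> X"
    then obtain q where q: "q \<in> X'" "dist x q \<le> epsI" using nearX' by blast
    have "norm x \<le> norm q + dist x q" by (metis dist_norm norm_triangle_sub add.commute)
    then show "norm x \<le> r + epsI" using r q by force
  qed
  ultimately show ?thesis using Xdef compact_eq_bounded_closed by blast
qed

lemma neuron_pos:
  assumes v: "norm v = 1" and x1: "x1 \<in> X" and x2: "x1 + \<delta> *\<^sub>R v \<in> X" and d: "\<delta> > 0"
  shows "(\<lambda>x. relu (v \<bullet> x - v \<bullet> x1)) \<in> Sr X"
proof -
  have vv: "valid X ((1/\<delta>) *\<^sub>R v, (v \<bullet> x1) / \<delta>)"
    unfolding valid_def
  proof (intro exI conjI)
    show "x1 \<in> X" "x1 + \<delta> *\<^sub>R v \<in> X" by fact+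
    show "x1 \<noteq> x1 + \<delta> *\<^sub>R v" using v d by auto
    show "fst ((1/\<delta>) *\<^sub>R v, (v \<bullet> x1) / \<delta>) = (1 / (norm (x1 + \<delta> *\<^sub>R v - x1))\<^sup>2) *\<^sub>R (x1 + \<delta> *\<^sub>R v - x1)"
      using v d by (simp add: power2_eq_square)
    show "snd ((1/\<delta>) *\<^sub>R v, (v \<bullet> x1) / \<delta>) = fst ((1/\<delta>) *\<^sub>R v, (v \<bullet> x1) / \<delta>) \<bullet> x1"
      by simp
  qed
  have "(\<lambda>x. \<delta> * relu (((1/\<delta>) *\<^sub>R v) \<bullet> x - (v \<bullet> x1) / \<delta>)) \<in> Sr X"
    by (rule Sr.Sn[OF vv])
  moreover have "(\<lambda>x. \<delta> * relu (((1/\<delta>) *\<^sub>R v) \<bullet> x - (v \<bullet> x1) / \<delta>)) = (\<lambda>x. relu (v \<bullet> x - v \<bullet> x1))"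
  proof
    fix x
    have "((1/\<delta>) *\<^sub>R v) \<bullet> x - (v \<bullet> x1) / \<delta> = (v \<bullet> x - v \<bullet> x1) / \<delta>"
      by (simp add: diff_divide_distrib)
    then show "\<delta> * relu (((1/\<delta>) *\<^sub>R v) \<bullet> x - (v \<bullet> x1) / \<delta>) = relu (v \<bullet> x - v \<bullet> x1)"
      using relu_scale_pos[OF d] by simp
  qed
  ultimately show ?thesis by simp
qed

lemma neuron_neg:
  assumes v: "norm v = 1" and x1: "x1 \<in> X" and x2: "x1 + \<delta> *\<^sub>R v \<in> X" and d: "\<delta> < 0"
  shows "(\<lambda>x. relu (v \<bullet> x1 - v \<bullet> x)) \<in> Sr X"
proof -
  have vv: "valid X ((1/\<delta>) *\<^sub>R v, (v \<bullet> x1) / \<delta>)"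
    unfolding valid_def
  proof (intro exI conjI)
    show "x1 \<in> X" "x1 + \<delta> *\<^sub>R v \<in> X" by fact+
    show "x1 \<noteq> x1 + \<delta> *\<^sub>R v" using v d by auto
    show "fst ((1/\<delta>) *\<^sub>R v, (v \<bullet> x1) / \<delta>) = (1 / (norm (x1 + \<delta> *\<^sub>R v - x1))\<^sup>2) *\<^sub>R (x1 + \<delta> *\<^sub>R v - x1)"
      using v d by (simp add: power2_eq_square)
    show "snd ((1/\<delta>) *\<^sub>R v, (v \<bullet> x1) / \<delta>) = fst ((1/\<delta>) *\<^sub>R v, (v \<bullet> x1) / \<delta>) \<bullet> x1"
      by simp
  qed
  have "(\<lambda>x. (- \<delta>) * relu (((1/\<delta>) *\<^sub>R v) \<bullet> x - (v \<bullet> x1) / \<delta>)) \<in> Sr X"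
    by (rule Sr.Sn[OF vv])
  moreover have "(\<lambda>x. (- \<delta>) * relu (((1/\<delta>) *\<^sub>R v) \<bullet> x - (v \<bullet> x1) / \<delta>)) = (\<lambda>x. relu (v \<bullet> x1 - v \<bullet> x))"
  proof
    fix x
    have "((1/\<delta>) *\<^sub>R v) \<bullet> x - (v \<bullet> x1) / \<delta> = (v \<bullet> x - v \<bullet> x1) / \<delta>"
      by (simp add: diff_divide_distrib)
    then show "(- \<delta>) * relu (((1/\<delta>) *\<^sub>R v) \<bullet> x - (v \<bullet> x1) / \<delta>) = relu (v \<bullet> x1 - v \<bullet> x)"
      using relu_scale_neg[OF d, of "v \<bullet> x - v \<bullet> x1"] by simp
  qed
  ultimately show ?thesis by simp
qed

lemma vv1: "norm v = 1 \<Longrightarrow> v \<bullet> v = 1"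
  by (simp add: power2_norm_eq_inner[symmetric])

lemma thr:
  assumes v: "norm v = 1" and x: "x \<in> X"
  shows "(\<lambda>y. relu (v \<bullet> y - v \<bullet> x)) \<in> Sr X \<or> (\<lambda>y. relu (v \<bullet> x - v \<bullet> y)) \<in> Sr X"
proof -
  obtain q where q: "q \<in> X'" "dist x q \<le> epsI" using nearX'[OF x] by blast
  define s where "s = v \<bullet> (x - q)"
  have "\<bar>s\<bar> \<le> norm v * norm (x - q)" unfolding s_def by (rule Cauchy_Schwarz_ineq2)
  then have s: "\<bar>s\<bar> \<le> epsI" using v q by (simp add: dist_norm)
  define x1 where "x1 = q + s *\<^sub>R v"
  have x1X: "x1 \<in> X" using inX[OF q(1), of x1] s v by (simp add: x1_def dist_norm)
  have vx1: "v \<bullet> x1 = v \<bullet> x" using vv1[OF v] by (simp add: x1_def s_def inner_add_right inner_diff_right)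
  show ?thesis
  proof (cases "s < epsI")
    case True
    have "x1 + (epsI - s) *\<^sub>R v = q + epsI *\<^sub>R v" by (simp add: x1_def algebra_simps)
    moreover have "q + epsI *\<^sub>R v \<in> X" using inX[OF q(1)] v ep by (simp add: dist_norm)
    ultimately have "(\<lambda>y. relu (v \<bullet> y - v \<bullet> x1)) \<in> Sr X"
      using neuron_pos[OF v x1X, of "epsI - s"] True by simp
    then show ?thesis using vx1 by simp
  next
    case False
    then have "s = epsI" using s by simp
    then have "x1 + (- 2 * epsI) *\<^sub>R v = q - epsI *\<^sub>R v" by (simp add: x1_def algebra_simps flip: scaleR_add_left)
    moreover have "q - epsI *\<^sub>R v \<in> X" using inX[OF q(1)] v ep by (simp add: dist_norm)
    ultimately have "(\<lambda>y. relu (v \<bullet> x1 - v \<bullet> y)) \<in> Sr X"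
      using neuron_neg[OF v x1X, of "- 2 * epsI"] ep by simp
    then show ?thesis using vx1 by simp
  qed
qed

lemma lin:
  assumes v: "norm v = 1"
  shows "(\<lambda>y. v \<bullet> y) \<in> Sr X"
proof -
  obtain q where q: "q \<in> X'" using ne by blast
  have qX: "q \<in> X" using X'X q by blast
  have p1: "q + epsI *\<^sub>R v \<in> X" using inX[OF q] v ep by (simp add: dist_norm)
  have p2: "q + (- epsI) *\<^sub>R v \<in> X" using inX[OF q] v ep by (simp add: dist_norm)
  have a: "(\<lambda>y. relu (v \<bullet> y - v \<bullet> q)) \<in> Sr X" using neuron_pos[OF v qX p1] ep by simp
  have b: "(\<lambda>y. relu (v \<bullet> q - v \<bullet> y)) \<in> Sr X" using neuron_neg[OF v qX p2] ep by simp
  have "(\<lambda>y. (relu (v \<bullet> y - v \<bullet> q) - relu (v \<bullet> q - v \<bullet> y)) + v \<bullet> q) \<in> Sr X"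
    by (intro Sr.Sa Sr_diff a b Sr.Sc)
  moreover have "(\<lambda>y. (relu (v \<bullet> y - v \<bullet> q) - relu (v \<bullet> q - v \<bullet> y)) + v \<bullet> q) = (\<lambda>y. v \<bullet> y)"
    using relu_odd by (auto simp: fun_eq_iff relu_def)
  ultimately show ?thesis by simp
qed

lemma thr2:
  assumes v: "norm v = 1" and x: "x \<in> X"
  shows "(\<lambda>y. relu (v \<bullet> y - v \<bullet> x)) \<in> Sr X"
  using thr[OF v x]
proof
  assume b: "(\<lambda>y. relu (v \<bullet> x - v \<bullet> y)) \<in> Sr X"
  have "(\<lambda>y. relu (v \<bullet> x - v \<bullet> y) + (v \<bullet> y + (- (v \<bullet> x)))) \<in> Sr X"
    by (intro Sr.Sa b lin[OF v] Sr.Sc)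
  moreover have "(\<lambda>y. relu (v \<bullet> x - v \<bullet> y) + (v \<bullet> y + (- (v \<bullet> x)))) = (\<lambda>y. relu (v \<bullet> y - v \<bullet> x))"
    by (auto simp: fun_eq_iff relu_def)
  ultimately show ?thesis by simp
qed


lemma ridge_relu:
  assumes v: "norm v = 1"
  shows "SrX X (\<lambda>y. relu (v \<bullet> y - c))"
proof -
  define T where "T = (\<lambda>y. v \<bullet> y) ` X"
  have cT: "compact T" unfolding T_def
    by (intro compact_continuous_image compactX continuous_intros)
  consider "c \<in> T" | "T \<inter> {..c} = {}" | "T \<inter> {c..} = {}" | "c \<notin> T" "T \<inter> {..c} \<noteq> {}" "T \<inter> {c..} \<noteq> {}"
    by blast
  then show ?thesis
  proof cases
    case 1
    then obtain x where x: "x \<in> X" "c = v \<bullet> x" unfolding T_def by blast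
    have "SrX X (\<lambda>y. relu (v \<bullet> y - v \<bullet> x))" by (rule SrX_Sr[OF thr2[OF v x(1)]])
    then show ?thesis by (simp only: x(2))
  next
    case 2
    have A: "SrX X (\<lambda>y. v \<bullet> y - c)" by (rule SrX_Sr[OF Sr_diff[OF lin[OF v] Sr.Sc]])
    have Bq: "v \<bullet> y - c = relu (v \<bullet> y - c)" if "y \<in> X" for y
    proof -
      have tT: "v \<bullet> y \<in> T" using that T_def by blast
      have "v \<bullet> y \<notin> T \<inter> {..c}" using 2 by simp
      then have "\<not> v \<bullet> y \<le> c" using tT by simp
      then show ?thesis by (simp add: relu_nn)
    qed
    show ?thesis by (rule SrX_cong[OF A Bq])
  next
    case 3
    have E0: "0 = relu (v \<bullet> y - c)" if "y \<in> X" for y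
    proof -
      have tT: "v \<bullet> y \<in> T" using that T_def by blast
      have "v \<bullet> y \<notin> T \<inter> {c..}" using 3 by simp
      then have "\<not> c \<le> v \<bullet> y" using tT by simp
      then show ?thesis by (simp add: relu_np)
    qed
    show ?thesis by (rule SrX_cong[OF SrX_const E0])
  next
    case 4
    have k1: "compact (T \<inter> {..c})" by (intro compact_Int_closed cT closed_atMost)
    have k2: "compact (T \<inter> {c..})" by (intro compact_Int_closed cT closed_atLeast)
    obtain c1 where c1: "c1 \<in> T \<inter> {..c}" "\<forall>t\<in>T \<inter> {..c}. t \<le> c1"
      using compact_attains_sup[OF k1 4(2)] by blast
    obtain c2 where c2: "c2 \<in> T \<inter> {c..}" "\<forall>t\<in>T \<inter> {c..}. c2 \<le> t"
      using compact_attains_inf[OF k2 4(3)] by blast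
    have "c1 \<noteq> c" using c1(1) 4(1) by blast
    moreover have "c1 \<le> c" using c1(1) by simp
    ultimately have lt1: "c1 < c" by simp
    have "c2 \<noteq> c" using c2(1) 4(1) by blast
    moreover have "c \<le> c2" using c2(1) by simp
    ultimately have lt2: "c < c2" by simp
    obtain x1 where x1: "x1 \<in> X" "c1 = v \<bullet> x1" using c1(1) unfolding T_def by blast
    obtain x2 where x2: "x2 \<in> X" "c2 = v \<bullet> x2" using c2(1) unfolding T_def by blast
    have r1: "(\<lambda>y. relu (v \<bullet> y - c1)) \<in> Sr X" using thr2[OF v x1(1)] by (simp only: x1(2))
    have r2: "(\<lambda>y. relu (v \<bullet> y - c2)) \<in> Sr X" using thr2[OF v x2(1)] by (simp only: x2(2))
    define k where "k = (c2 - c) / (c2 - c1)"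
    have kk: "k * (c2 - c1) = c2 - c" using lt1 lt2 by (simp add: k_def)
    have M: "(\<lambda>y. relu (v \<bullet> y - c2) + k * (relu (v \<bullet> y - c1) - relu (v \<bullet> y - c2))) \<in> Sr X"
      by (rule Sr.Sa[OF r2 Sr_scale[OF Sr_diff[OF r1 r2]]])
    have E: "relu (v \<bullet> y - c2) + k * (relu (v \<bullet> y - c1) - relu (v \<bullet> y - c2)) = relu (v \<bullet> y - c)"
      if "y \<in> X" for y
    proof -
      have tT: "v \<bullet> y \<in> T" using that T_def by blast
      show ?thesis
      proof (cases "v \<bullet> y \<le> c")
        case True
        then have "v \<bullet> y \<in> T \<inter> {..c}" using tT by simp
        then have "v \<bullet> y \<le> c1" using c1(2) by blast
        then show ?thesis using lt1 lt2 True by (simp add: relu_np)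
      next
        case False
        then have "v \<bullet> y \<in> T \<inter> {c..}" using tT by simp
        then have "c2 \<le> v \<bullet> y" using c2(2) by blast
        then have R: "relu (v \<bullet> y - c2) = v \<bullet> y - c2" "relu (v \<bullet> y - c1) = v \<bullet> y - c1" "relu (v \<bullet> y - c) = v \<bullet> y - c"
          using lt1 lt2 by (simp_all add: relu_nn)
        have "(v \<bullet> y - c2) + k * ((v \<bullet> y - c1) - (v \<bullet> y - c2)) = v \<bullet> y - c"
          using kk by (simp add: algebra_simps)
        then show ?thesis unfolding R .
      qed
    qed
    show ?thesis by (rule SrX_cong[OF SrX_Sr[OF M] E])
  qed
qed

lemma ridge_exp:
  assumes e: "\<epsilon> > 0"
  shows "\<exists>s\<in>Sr X. \<forall>x\<in>X. \<bar>exp (u \<bullet> x) - s x\<bar> < \<epsilon>"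
proof (cases "u = 0")
  case True
  then show ?thesis using e Sr.Sc[of 1 X] by (intro bexI[of _ "\<lambda>x. 1"]) auto
next
  case False
  define r where "r = norm u"
  have rp: "r > 0" using False r_def by simp
  define v where "v = (1 / r) *\<^sub>R u"
  have v: "norm v = 1" using rp by (simp add: v_def r_def)
  have uv: "u \<bullet> x = r * (v \<bullet> x)" for x using rp by (simp add: v_def)
  obtain B where B: "\<forall>x\<in>X. norm x \<le> B"
    using compact_imp_bounded[OF compactX] bounded_iff by blast
  have vB: "v \<bullet> x \<in> {-B-1..B+1}" if "x \<in> X" for x
  proof -
    have "\<bar>v \<bullet> x\<bar> \<le> norm v * norm x" by (rule Cauchy_Schwarz_ineq2)
    then show ?thesis using B that v by auto
  qed
  have Bp: "-B-1 < B+1"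
  proof -
    obtain q where "q \<in> X" using ne X'X by blast
    then have "0 \<le> B" using B by (meson norm_ge_zero order_trans)
    then show ?thesis by linarith
  qed
  have gc: "continuous_on {-B-1..B+1} (\<lambda>t. exp (r * t))" by (intro continuous_intros)
  obtain c0 and n :: nat and \<alpha> c \<beta> d where P:
    "\<forall>t\<in>{-B-1..B+1}. \<bar>exp (r * t) - (c0 + (\<Sum>k<n. \<alpha> k * relu (t - c k) + \<beta> k * relu (t - d k)))\<bar> < \<epsilon>"
    using pl_approx[OF gc Bp e] by blast
  have "SrX X (\<lambda>x. c0 + (\<Sum>k<n. \<alpha> k * relu (v \<bullet> x - c k) + \<beta> k * relu (v \<bullet> x - d k)))"
    by (intro SrX_add SrX_const SrX_sum SrX_scale ridge_relu[OF v])
  then obtain s where s: "s \<in> Sr X" "\<forall>x\<in>X. s x = c0 + (\<Sum>k<n. \<alpha> k * relu (v \<bullet> x - c k) + \<beta> k * relu (v \<bullet> x - d k))"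
    unfolding SrX_def by blast
  show ?thesis
  proof (intro bexI[OF _ s(1)] ballI)
    fix x assume x: "x \<in> X"
    have "\<bar>exp (r * (v \<bullet> x)) - (c0 + (\<Sum>k<n. \<alpha> k * relu (v \<bullet> x - c k) + \<beta> k * relu (v \<bullet> x - d k)))\<bar> < \<epsilon>"
      using P vB[OF x] by blast
    moreover have "s x = c0 + (\<Sum>k<n. \<alpha> k * relu (v \<bullet> x - c k) + \<beta> k * relu (v \<bullet> x - d k))"
      using s(2) x by blast
    ultimately show "\<bar>exp (u \<bullet> x) - s x\<bar> < \<epsilon>" by (simp only: uv)
  qed
qed

definition appr :: "('a \<Rightarrow> real) \<Rightarrow> bool" where
  "appr h \<longleftrightarrow> (\<forall>\<epsilon>>0. \<exists>s\<in>Sr X. \<forall>x\<in>X. \<bar>h x - s x\<bar> < \<epsilon>)"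

lemma appr_add: assumes "appr f" "appr g" shows "appr (\<lambda>x. f x + g x)"
  unfolding appr_def
proof (intro allI impI)
  fix \<epsilon> :: real assume e: "\<epsilon> > 0"
  obtain s1 where s1: "s1 \<in> Sr X" "\<forall>x\<in>X. \<bar>f x - s1 x\<bar> < \<epsilon>/2" using assms(1) e unfolding appr_def by (meson half_gt_zero)
  obtain s2 where s2: "s2 \<in> Sr X" "\<forall>x\<in>X. \<bar>g x - s2 x\<bar> < \<epsilon>/2" using assms(2) e unfolding appr_def by (meson half_gt_zero)
  show "\<exists>s\<in>Sr X. \<forall>x\<in>X. \<bar>f x + g x - s x\<bar> < \<epsilon>"
  proof (intro bexI[OF _ Sr.Sa[OF s1(1) s2(1)]] ballI)
    fix x assume "x \<in> X"
    then have a: "\<bar>f x - s1 x\<bar> < \<epsilon>/2" "\<bar>g x - s2 x\<bar> < \<epsilon>/2" using s1 s2 by auto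
    have eq: "f x + g x - (s1 x + s2 x) = (f x - s1 x) + (g x - s2 x)" by simp
    show "\<bar>f x + g x - (s1 x + s2 x)\<bar> < \<epsilon>"
      unfolding eq using abs_triangle_ineq[of "f x - s1 x" "g x - s2 x"] a by linarith
  qed
qed

lemma appr_scale: assumes "appr f" shows "appr (\<lambda>x. k * f x)"
  unfolding appr_def
proof (intro allI impI)
  fix \<epsilon> :: real assume e: "\<epsilon> > 0"
  have e': "\<epsilon> / (\<bar>k\<bar> + 1) > 0" using e by simp
  obtain s1 where s1: "s1 \<in> Sr X" "\<forall>x\<in>X. \<bar>f x - s1 x\<bar> < \<epsilon> / (\<bar>k\<bar> + 1)" using assms e' unfolding appr_def by blast
  show "\<exists>s\<in>Sr X. \<forall>x\<in>X. \<bar>k * f x - s x\<bar> < \<epsilon>"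
  proof (intro bexI[OF _ Sr_scale[OF s1(1), of k]] ballI)
    fix x assume x: "x \<in> X"
    have "\<bar>k * f x - k * s1 x\<bar> = \<bar>k\<bar> * \<bar>f x - s1 x\<bar>" by (simp add: abs_mult[symmetric] algebra_simps)
    also have "\<dots> \<le> (\<bar>k\<bar> + 1) * \<bar>f x - s1 x\<bar>" by (simp add: mult_right_mono)
    also have "\<dots> < (\<bar>k\<bar> + 1) * (\<epsilon> / (\<bar>k\<bar> + 1))"
      using s1(2) x by (intro mult_strict_left_mono) (auto simp: add_pos_nonneg)
    also have "\<dots> = \<epsilon>" by (simp add: field_simps add_pos_nonneg)
    finally show "\<bar>k * f x - k * s1 x\<bar> < \<epsilon>" .
  qed
qed



lemma EA_appr: "EA f \<Longrightarrow> appr f"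
proof (induction rule: EA.induct)
  case (E1 c u)
  have "appr (\<lambda>x. exp (u \<bullet> x))" unfolding appr_def using ridge_exp by blast
  then show ?case by (rule appr_scale)
next
  case (E2 f g)
  then show ?case using appr_add by blast
qed

lemma density:
  assumes g: "continuous_on X g" and e: "\<epsilon> > 0"
  shows "\<exists>s\<in>Sr X. \<forall>x\<in>X. \<bar>g x - s x\<bar> < \<epsilon>"
proof -
  have e2: "\<epsilon>/2 > 0" using e by simp
  obtain p where p: "EA p" "\<forall>x\<in>X. \<bar>g x - p x\<bar> < \<epsilon>/2"
    using Stone_Weierstrass_HOL[of X EA g "\<epsilon>/2", OF compactX EA_const EA_cont _ EA_mult EA_sep g e2]
      EA.E2 by blast
  obtain s where s: "s \<in> Sr X" "\<forall>x\<in>X. \<bar>p x - s x\<bar> < \<epsilon>/2"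
    using EA_appr[OF p(1)] e2 unfolding appr_def by blast
  show ?thesis
  proof (intro bexI[OF _ s(1)] ballI)
    fix x assume x: "x \<in> X"
    have a: "\<bar>g x - p x\<bar> < \<epsilon>/2" "\<bar>p x - s x\<bar> < \<epsilon>/2" using p(2) s(2) x by auto
    have eq: "g x - s x = (g x - p x) + (p x - s x)" by simp
    show "\<bar>g x - s x\<bar> < \<epsilon>"
      unfolding eq using abs_triangle_ineq[of "g x - p x" "p x - s x"] a by linarith
  qed
qed

end



theorem corollary1:
  fixes X' :: "'a::euclidean_space set" and epsI :: real and f :: "'a \<Rightarrow> 'b::euclidean_space"
    and e :: real
  assumes "compact X'" and "X' \<noteq> {}" and "reach X' > 0"
    and "0 < epsI" and "ereal epsI < reach X'" and "epsI < 1"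
    and "continuous_on {x. infdist x X' \<le> epsI} f"
    and "0 < e"
  shows "\<exists>N :: ('a, 'b) relu_net. well_formed N \<and> sampled {x. infdist x X' \<le> epsI} N \<and>
           (\<forall>x \<in> {x. infdist x X' \<le> epsI}. norm (net_eval N x - f x) < e)"
proof -
  define X where "X = {x. infdist x X' \<le> epsI}"
  note cX' = assms(1) and ne = assms(2) and ep = assms(4)
  have fc: "continuous_on X f" using assms(7) X_def by simp
  obtain q where q: "q \<in> X'" using ne by blast
  obtain i0 :: 'a where i0: "i0 \<in> Basis" using nonempty_Basis by blast
  define x2 where "x2 = q + epsI *\<^sub>R i0"
  have qX: "q \<in> X" using inX[OF cX' ne ep X_def q, of q] ep by simp
  have x2X: "x2 \<in> X" using inX[OF cX' ne ep X_def q, of x2] i0 ep by (simp add: x2_def dist_norm)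
  have qx2: "q \<noteq> x2" using i0 ep by (simp add: x2_def nonzero_Basis)
  define w0 where "w0 = (1 / (norm (x2 - q))\<^sup>2) *\<^sub>R (x2 - q)"
  have n0: "valid X (w0, w0 \<bullet> q)" unfolding valid_def w0_def using qX x2X qx2 by auto
  have de: "e / real DIM('b) > 0" using assms(8) by simp
  have "\<forall>i\<in>(Basis::'b set). \<exists>s. s \<in> Sr X \<and> (\<forall>x\<in>X. \<bar>f x \<bullet> i - s x\<bar> < e / real DIM('b))"
  proof
    fix i :: 'b assume "i \<in> Basis"
    have "continuous_on X (\<lambda>x. f x \<bullet> i)" using fc by (intro continuous_intros)
    then show "\<exists>s. s \<in> Sr X \<and> (\<forall>x\<in>X. \<bar>f x \<bullet> i - s x\<bar> < e / real DIM('b))"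
      using density[OF cX' ne ep X_def _ de] by blast
  qed
  then obtain s where s: "\<forall>i\<in>(Basis::'b set). s i \<in> Sr X \<and> (\<forall>x\<in>X. \<bar>f x \<bullet> i - s i x\<bar> < e / real DIM('b))"
    by metis
  obtain N :: "('a, 'b) relu_net" where N: "gnet X N" "\<forall>x. net_eval N x = (\<Sum>i\<in>Basis. s i x *\<^sub>R i)"
    using sum_net[of "Basis :: 'b set" X "(w0, w0 \<bullet> q)" s] n0 s by auto
  have err: "norm (net_eval N x - f x) < e" if x: "x \<in> X" for x
  proof -
    have "net_eval N x - f x = (\<Sum>i\<in>Basis. s i x *\<^sub>R i) - (\<Sum>i\<in>Basis. (f x \<bullet> i) *\<^sub>R i)"
      using N(2) euclidean_representation[of "f x"] by simp
    also have "\<dots> = (\<Sum>i\<in>Basis. (s i x - f x \<bullet> i) *\<^sub>R i)"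
      by (simp add: sum_subtractf scaleR_diff_left)
    finally have eq: "net_eval N x - f x = (\<Sum>i\<in>Basis. (s i x - f x \<bullet> i) *\<^sub>R i)" .
    have "norm (\<Sum>i\<in>(Basis::'b set). (s i x - f x \<bullet> i) *\<^sub>R i) \<le> (\<Sum>i\<in>Basis. norm ((s i x - f x \<bullet> i) *\<^sub>R i))"
      by (rule norm_sum)
    also have "\<dots> = (\<Sum>i\<in>Basis. \<bar>f x \<bullet> i - s i x\<bar>)"
      by (intro sum.cong) (auto simp: abs_minus_commute)
    also have "\<dots> < (\<Sum>i\<in>(Basis::'b set). e / real DIM('b))"
      using s x by (intro sum_strict_mono) auto
    also have "\<dots> = e" by simp
    finally show ?thesis unfolding eq .
  qed
  show ?thesis
    using N(1) err unfolding gnet_def X_def by blast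
qed


end
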